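(* Let $n\ge2$, let $\mathcal{S}=\{\boldsymbol{\sigma}(\mathbf{t}):\mathbf{t}\in D\}$ be a rationally parameterisable hypersurface in $\mathbb{R}^n$, and let $O$ be an open subset of $D$ in $\mathbb{R}^{n-1}$ such that $\boldsymbol{\sigma}(O)=\{\boldsymbol{\sigma}(\mathbf{t}):\mathbf{t}\in O\}$ is not contained in any hyperplane of $\mathbb{R}^n$. Let $\mathbf{v}_1,\dots,\mathbf{v}_m$ be distinct points in $\mathbb{R}^n$ and let $P_1,\dots,P_m\in\mathbb{C}(\mathbf{x})$ be rational functions in $\mathbf{x}=(x_1,\dots,x_n)$. If \[\sum_{k=1}^m P_k(\mathbf{x})e^{-i\,\mathbf{v}_k\cdot\mathbf{x}}=0\quad\text{for all }\mathbf{x}\in\boldsymbol{\sigma}(O),\] then $P_k(\mathbf{x})=0$ for all $\mathbf{x}\in\boldsymbol{\sigma}(O)$ and all $k\in\{1,\dots,m\}$.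
   Context: A rationally parameterisable hypersurface is a set $\mathcal{S}=\{\boldsymbol{\sigma}(\mathbf{t}):\mathbf{t}\in D\}\subseteq\mathbb{R}^n$ where $\boldsymbol{\sigma}=(\sigma_1,\dots,\sigma_n)^T:\mathbb{R}^{n-1}\to\mathbb{R}^n$ has rational functions as components and $D\subseteq\mathbb{R}^{n-1}$ is a set on which all $\sigma_j$ are defined. "Hyperplane" means an affine hyperplane $\{\mathbf{x}:\mathbf{a}\cdot\mathbf{x}=b\}$, $\mathbf{a}\neq\mathbf{0}$. $\mathbb{C}(\mathbf{x})$ is the field of complex rational functions in $x_1,\dots,x_n$; the hypothesis includes that the sum is defined on $\boldsymbol{\sigma}(O)$. *)

theory Defs
  imports "HOL-Analysis.Analysis"
begin

definition real_poly_fun :: "(real^'n \<Rightarrow> real) \<Rightarrow> bool" where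
  "real_poly_fun f \<longleftrightarrow> (\<exists>A (c :: ('n \<Rightarrow> nat) \<Rightarrow> real). finite A \<and>
      (\<forall>x. f x = (\<Sum>\<alpha>\<in>A. c \<alpha> * (\<Prod>i\<in>UNIV. (x $ i) ^ (\<alpha> i)))))"

definition complex_poly_fun :: "(real^'n \<Rightarrow> complex) \<Rightarrow> bool" where
  "complex_poly_fun f \<longleftrightarrow> (\<exists>A (c :: ('n \<Rightarrow> nat) \<Rightarrow> complex). finite A \<and>
      (\<forall>x. f x = (\<Sum>\<alpha>\<in>A. c \<alpha> * (\<Prod>i\<in>UNIV. complex_of_real ((x $ i) ^ (\<alpha> i))))))"

definition in_some_hyperplane :: "(real^'n) set \<Rightarrow> bool" where
  "in_some_hyperplane S \<longleftrightarrow> (\<exists>a b. a \<noteq> 0 \<and> S \<subseteq> {x. inner a x = b})"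

end

theory Submission
  imports Defs "HOL-Computational_Algebra.Fundamental_Theorem_Algebra"
    "HOL-Computational_Algebra.Polynomial_Factorial" "HOL-Computational_Algebra.Field_as_Ring"
begin

lemma pderiv_X: "pderiv [:-z,1:] = (1::complex poly)"
  by (simp add: pderiv_pCons)

lemma X_pow_dvd_pderiv:
  fixes P :: "complex poly"
  shows "[:-z,1:] ^ (order z P - 1) dvd pderiv P"
proof (cases "P = 0")
  case True then show ?thesis by simp
next
  case False
  define X where "X = [:-z,1:]"
  then obtain P0 where P0: "P = X ^ order z P * P0" using order_decomp False by blast
  show ?thesis
  proof (cases "order z P")
    case 0 then show ?thesis by simp
  next
    case (Suc n)
    have dX: "pderiv X = 1" unfolding X_def by (rule pderiv_X)
    have dXn: "pderiv (X ^ Suc n) = smult (of_nat (Suc n)) (X^n)"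
      by (simp only: pderiv_power_Suc dX mult_1_right)
    have "pderiv P = X ^ Suc n * pderiv P0 + P0 * smult (of_nat (Suc n)) (X^n)"
      by (subst P0, simp only: Suc pderiv_mult dXn)
    also have "\<dots> = X ^ n * (X * pderiv P0 + smult (of_nat (Suc n)) P0)"
      by (simp add: algebra_simps)
    finally have "pderiv P = X ^ n * (X * pderiv P0 + smult (of_nat (Suc n)) P0)" .
    then show ?thesis by (simp add: Suc X_def)
  qed
qed

lemma order_dvd_self:
  fixes P :: "complex poly"
  shows "[:-z,1:] ^ order z P dvd P"
  by (cases "P = 0") (auto intro: order_1)

lemma wronsk_dvd:
  fixes P Q :: "complex poly"
  shows "[:-z,1:] ^ (order z P + order z Q - 1) dvd (pderiv P * Q - P * pderiv Q)"
proof -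
  let ?X = "[:-z,1:]"
  have "?X ^ (order z P - 1 + order z Q) dvd pderiv P * Q"
    unfolding power_add by (rule mult_dvd_mono[OF X_pow_dvd_pderiv order_dvd_self])
  then have 1: "?X ^ (order z P + order z Q - 1) dvd pderiv P * Q"
    by (rule dvd_trans[rotated]) (rule le_imp_power_dvd, simp)
  have "?X ^ (order z P + (order z Q - 1)) dvd P * pderiv Q"
    unfolding power_add by (rule mult_dvd_mono[OF order_dvd_self X_pow_dvd_pderiv])
  then have 2: "?X ^ (order z P + order z Q - 1) dvd P * pderiv Q"
    by (rule dvd_trans[rotated]) (rule le_imp_power_dvd, simp)
  from 1 2 show ?thesis by (rule dvd_diff)
qed

lemma core:
  fixes P Q U V :: "complex poly"
  assumes P: "P \<noteq> 0" and Q: "Q \<noteq> 0" and V: "V \<noteq> 0"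
    and eq: "(pderiv P * Q - P * pderiv Q) * V^2 + (pderiv U * V - U * pderiv V) * P * Q = 0"
  shows "pderiv U * V - U * pderiv V = 0"
proof -
  define d where "d = gcd U V"
  have d0: "d \<noteq> 0" using V by (simp add: d_def)
  define U1 where "U1 = U div d"
  define V1 where "V1 = V div d"
  have UU: "U = U1 * d" by (simp add: U1_def d_def)
  have VV: "V = V1 * d" by (simp add: V1_def d_def)
  have cop: "coprime U1 V1" using div_gcd_coprime V unfolding U1_def V1_def d_def by blast
  have V1: "V1 \<noteq> 0" using V VV by auto
  define W where "W = pderiv U1 * V1 - U1 * pderiv V1"
  define L where "L = pderiv P * Q - P * pderiv Q"
  have Wd: "pderiv U * V - U * pderiv V = d^2 * W"
    by (simp add: UU VV W_def pderiv_mult power2_eq_square algebra_simps)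
  have E: "L * V1^2 + W * P * Q = 0"
  proof -
    have "d^2 * (L * V1^2 + W * P * Q) = 0"
      using eq unfolding L_def[symmetric] Wd by (simp add: VV power_mult_distrib algebra_simps)
    then show ?thesis using d0 by simp
  qed
  have LE: "L * V1^2 = - (W*P*Q)" using E by (simp add: eq_neg_iff_add_eq_0)
  show ?thesis
  proof (rule ccontr)
    assume "pderiv U * V - U * pderiv V \<noteq> 0"
    then have W0: "W \<noteq> 0" using Wd by auto
    have RHS0: "W * P * Q \<noteq> 0" using W0 P Q by simp
    show False
    proof (cases "degree V1 = 0")
      case True
      then obtain c where c: "V1 = [:c:]" by (metis degree_eq_zeroE)
      have c0: "c \<noteq> 0" using V1 c by auto
      have L0: "L \<noteq> 0" using LE RHS0 by auto
      have dR: "degree (W*P*Q) = degree W + degree P + degree Q" using W0 P Q by (simp add: degree_mult_eq)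
      have "L * V1^2 = smult (c*c) L" by (simp add: c power2_eq_square)
      then have dL: "degree (L * V1^2) = degree L" using c0 by simp
      have pq: "degree P + degree Q \<ge> 1"
      proof (rule ccontr)
        assume "\<not> ?thesis"
        then have "degree P = 0" "degree Q = 0" by auto
        then have "pderiv P = 0" "pderiv Q = 0" by (simp_all add: pderiv_eq_0_iff)
        then show False using L0 by (simp add: L_def)
      qed
      have "degree (pderiv P * Q) \<le> degree P + degree Q - 1"
      proof (cases "degree P = 0")
        case True then have "pderiv P = 0" by (simp add: pderiv_eq_0_iff)
        then show ?thesis by simp
      next
        case False then show ?thesis
          using degree_mult_le[of "pderiv P" Q] degree_pderiv[of P] pq by linarith
      qed
      moreover have "degree (P * pderiv Q) \<le> degree P + degree Q - 1"
      proof (cases "degree Q = 0")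
        case True then have "pderiv Q = 0" by (simp add: pderiv_eq_0_iff)
        then show ?thesis by simp
      next
        case False then show ?thesis
          using degree_mult_le[of P "pderiv Q"] degree_pderiv[of Q] pq by linarith
      qed
      ultimately have "degree L \<le> degree P + degree Q - 1" unfolding L_def by (rule degree_diff_le)
      moreover have "degree L = degree W + degree P + degree Q" using LE dL dR by simp
      ultimately show False using pq by linarith
    next
      case False
      obtain z where z: "poly V1 z = 0"
        using fundamental_theorem_of_algebra[of V1] constant_degree[of V1] False by auto
      have Uz: "poly U1 z \<noteq> 0"
      proof
        assume "poly U1 z = 0"
        then have "[:-z,1:] dvd U1" "[:-z,1:] dvd V1" using z by (simp_all add: poly_eq_0_iff_dvd)
        then have "is_unit [:-z,1:]" using cop coprime_common_divisor by blast
        then show False by (simp add: is_unit_iff_degree)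
      qed
      obtain C where C: "V1 = [:-z,1:] ^ order z V1 * C" "\<not> [:-z,1:] dvd C"
        using order_decomp V1 by blast
      have Cz: "poly C z \<noteq> 0" using C(2) by (simp add: poly_eq_0_iff_dvd)
      have "order z V1 \<noteq> 0" using z V1 by (simp add: order_root)
      then obtain r' where r': "order z V1 = Suc r'" by (cases "order z V1") auto
      define Y where "Y = [:-z,1:]"
      have dY: "pderiv Y = 1" unfolding Y_def by (rule pderiv_X)
      have V1Y: "V1 = Y ^ Suc r' * C" using C(1) r' Y_def by simp
      have dYn: "pderiv (Y ^ Suc r') = smult (of_nat (Suc r')) (Y^r')"
        by (simp only: pderiv_power_Suc dY mult_1_right)
      have dV1: "pderiv V1 = Y ^ Suc r' * pderiv C + C * smult (of_nat (Suc r')) (Y^r')"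
        by (subst V1Y, simp only: pderiv_mult dYn)
      define G where "G = pderiv U1 * Y * C - U1 * (smult (of_nat (Suc r')) C + Y * pderiv C)"
      have WG: "W = Y ^ r' * G"
        unfolding W_def G_def dV1 by (subst V1Y) (simp add: algebra_simps)
      have "poly Y z = 0" by (simp add: Y_def)
      then have "poly G z = - poly U1 z * of_nat (Suc r') * poly C z"
        by (simp add: G_def)
      moreover have "(of_nat (Suc r') :: complex) \<noteq> 0" by (simp only: of_nat_eq_0_iff)
      ultimately have Gz: "poly G z \<noteq> 0" using Uz Cz by (simp only: mult_eq_0_iff neg_equal_0_iff_equal) simp
      have G0: "G \<noteq> 0" using Gz by auto
      have oG: "order z G = 0" using Gz by (simp add: order_root)
      have oW: "order z W = r'" using G0 unfolding WG
        by (simp add: order_mult Y_def order_power_n_n oG)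
      have oR: "order z (W*P*Q) = r' + order z P + order z Q"
        using RHS0 W0 P Q by (simp add: order_mult oW)
      have "Y ^ (order z P + order z Q - 1) dvd L" unfolding L_def Y_def by (rule wronsk_dvd)
      moreover have "Y ^ (2 * Suc r') dvd V1^2"
      proof -
        have "V1^2 = Y^(Suc r' * 2) * C^2" by (simp only: V1Y power_mult_distrib power_mult)
        then show ?thesis by (metis dvd_triv_left mult.commute)
      qed
      ultimately have "Y ^ (order z P + order z Q - 1 + 2 * Suc r') dvd L * V1^2"
        unfolding power_add by (rule mult_dvd_mono)
      then have "Y ^ (order z P + order z Q - 1 + 2 * Suc r') dvd W * P * Q"
        using LE by simp
      then have "order z P + order z Q - 1 + 2 * Suc r' \<le> order z (W*P*Q)"
        using RHS0 unfolding Y_def order_divides by simp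
      then show False using oR by arith
    qed
  qed
qed


definition crat :: "real set \<Rightarrow> (real \<Rightarrow> complex) \<Rightarrow> bool" where
  "crat S f \<longleftrightarrow> (\<exists>N M. \<forall>s\<in>S. poly M (of_real s) \<noteq> 0 \<and> f s = poly N (of_real s) / poly M (of_real s))"

lemma cratE:
  assumes "crat S f"
  obtains N M where "\<And>s. s \<in> S \<Longrightarrow> poly M (of_real s) \<noteq> 0"
    "\<And>s. s \<in> S \<Longrightarrow> f s = poly N (of_real s) / poly M (of_real s)"
  using assms unfolding crat_def by blast

lemma crat_mono: "crat S f \<Longrightarrow> T \<subseteq> S \<Longrightarrow> crat T f"
  unfolding crat_def by blast

lemma crat_cong: "crat S f \<Longrightarrow> (\<And>s. s \<in> S \<Longrightarrow> f s = g s) \<Longrightarrow> crat S g"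
  unfolding crat_def by metis

lemma crat_const: "crat S (\<lambda>s. c)"
  unfolding crat_def by (rule exI[of _ "[:c:]"], rule exI[of _ 1]) simp

lemma crat_id: "crat S (\<lambda>s. of_real s)"
  unfolding crat_def by (rule exI[of _ "[:0,1:]"], rule exI[of _ 1]) simp

lemma cratI:
  assumes "\<And>s. s \<in> S \<Longrightarrow> poly M (of_real s) \<noteq> 0"
    "\<And>s. s \<in> S \<Longrightarrow> f s = poly N (of_real s) / poly M (of_real s)"
  shows "crat S f"
  unfolding crat_def using assms by blast

lemma crat_add: "crat S f \<Longrightarrow> crat S g \<Longrightarrow> crat S (\<lambda>s. f s + g s)"
proof -
  assume "crat S f" "crat S g"
  then obtain N1 M1 N2 M2 where 1: "\<forall>s\<in>S. poly M1 (of_real s) \<noteq> 0 \<and> f s = poly N1 (of_real s) / poly M1 (of_real s)"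
    and 2: "\<forall>s\<in>S. poly M2 (of_real s) \<noteq> 0 \<and> g s = poly N2 (of_real s) / poly M2 (of_real s)"
    unfolding crat_def by blast
  show ?thesis
  proof (rule cratI)
    fix s assume s: "s \<in> S"
    have a: "poly M1 (of_real s) \<noteq> 0" "poly M2 (of_real s) \<noteq> 0" using 1 2 s by auto
    have b: "f s = poly N1 (of_real s) / poly M1 (of_real s)" "g s = poly N2 (of_real s) / poly M2 (of_real s)" using 1 2 s by auto
    show "poly (M1 * M2) (of_real s) \<noteq> 0" using a by simp
    show "f s + g s = poly (N1 * M2 + N2 * M1) (of_real s) / poly (M1 * M2) (of_real s)"
      unfolding b using a by (simp add: add_frac_eq)
  qed
qed

lemma crat_mult: "crat S f \<Longrightarrow> crat S g \<Longrightarrow> crat S (\<lambda>s. f s * g s)"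
proof -
  assume "crat S f" "crat S g"
  then obtain N1 M1 N2 M2 where 1: "\<forall>s\<in>S. poly M1 (of_real s) \<noteq> 0 \<and> f s = poly N1 (of_real s) / poly M1 (of_real s)"
    and 2: "\<forall>s\<in>S. poly M2 (of_real s) \<noteq> 0 \<and> g s = poly N2 (of_real s) / poly M2 (of_real s)"
    unfolding crat_def by blast
  show ?thesis
  proof (rule cratI)
    fix s assume s: "s \<in> S"
    have a: "poly M1 (of_real s) \<noteq> 0" "poly M2 (of_real s) \<noteq> 0" using 1 2 s by auto
    have b: "f s = poly N1 (of_real s) / poly M1 (of_real s)" "g s = poly N2 (of_real s) / poly M2 (of_real s)" using 1 2 s by auto
    show "poly (M1 * M2) (of_real s) \<noteq> 0" using a by simp
    show "f s * g s = poly (N1 * N2) (of_real s) / poly (M1 * M2) (of_real s)"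
      unfolding b using a by simp
  qed
qed

lemma crat_divide: "crat S f \<Longrightarrow> crat S g \<Longrightarrow> (\<And>s. s \<in> S \<Longrightarrow> g s \<noteq> 0) \<Longrightarrow> crat S (\<lambda>s. f s / g s)"
proof -
  assume "crat S f" "crat S g" and g0: "\<And>s. s \<in> S \<Longrightarrow> g s \<noteq> 0"
  then obtain N1 M1 N2 M2 where 1: "\<forall>s\<in>S. poly M1 (of_real s) \<noteq> 0 \<and> f s = poly N1 (of_real s) / poly M1 (of_real s)"
    and 2: "\<forall>s\<in>S. poly M2 (of_real s) \<noteq> 0 \<and> g s = poly N2 (of_real s) / poly M2 (of_real s)"
    unfolding crat_def by blast
  show ?thesis
  proof (rule cratI)
    fix s assume s: "s \<in> S"
    have a: "poly M1 (of_real s) \<noteq> 0" "poly M2 (of_real s) \<noteq> 0" using 1 2 s by auto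
    have b: "f s = poly N1 (of_real s) / poly M1 (of_real s)" "g s = poly N2 (of_real s) / poly M2 (of_real s)" using 1 2 s by auto
    have c: "poly N2 (of_real s) \<noteq> 0" using g0[OF s] b(2) by auto
    show "poly (M1 * N2) (of_real s) \<noteq> 0" using a c by simp
    show "f s / g s = poly (N1 * M2) (of_real s) / poly (M1 * N2) (of_real s)"
      unfolding b using a c by simp
  qed
qed

lemma crat_minus: "crat S f \<Longrightarrow> crat S (\<lambda>s. - f s)"
  using crat_mult[OF crat_const[of S "-1"]] by simp

lemma crat_diff: "crat S f \<Longrightarrow> crat S g \<Longrightarrow> crat S (\<lambda>s. f s - g s)"
  using crat_add[OF _ crat_minus] by simp

lemma crat_sum: "finite A \<Longrightarrow> (\<And>i. i \<in> A \<Longrightarrow> crat S (f i)) \<Longrightarrow> crat S (\<lambda>s. \<Sum>i\<in>A. f i s)"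
  by (induction A rule: finite_induct) (auto intro: crat_add crat_const)

lemma crat_prod: "finite A \<Longrightarrow> (\<And>i. i \<in> A \<Longrightarrow> crat S (f i)) \<Longrightarrow> crat S (\<lambda>s. \<Prod>i\<in>A. f i s)"
  by (induction A rule: finite_induct) (auto intro: crat_mult crat_const)

lemma crat_power: "crat S f \<Longrightarrow> crat S (\<lambda>s. f s ^ n)"
  by (induction n) (auto intro: crat_mult crat_const)

lemma poly_zero_inf:
  fixes P :: "complex poly"
  assumes "infinite T" "\<And>s. s \<in> T \<Longrightarrow> poly P (of_real s) = 0"
  shows "P = 0"
proof (rule ccontr)
  assume "P \<noteq> 0"
  then have "finite {x. poly P x = 0}" by (rule poly_roots_finite)
  moreover have "of_real ` T \<subseteq> {x. poly P x = 0}" using assms(2) by auto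
  ultimately have "finite ((of_real :: real \<Rightarrow> complex) ` T)" by (rule finite_subset[rotated])
  then have "finite T" by (rule finite_imageD) (simp add: inj_on_def)
  then show False using assms(1) by simp
qed

lemma crat_zero:
  assumes "crat S f" "T \<subseteq> S" "infinite T" "\<And>s. s \<in> T \<Longrightarrow> f s = 0"
  shows "\<And>s. s \<in> S \<Longrightarrow> f s = 0"
proof -
  obtain N M where 1: "\<And>s. s \<in> S \<Longrightarrow> poly M (of_real s) \<noteq> 0"
    "\<And>s. s \<in> S \<Longrightarrow> f s = poly N (of_real s) / poly M (of_real s)"
    using cratE[OF assms(1)] by metis
  have "N = 0"
    by (rule poly_zero_inf[OF assms(3)]) (use assms(2,4) 1 in force)
  then show "\<And>s. s \<in> S \<Longrightarrow> f s = 0" using 1 by simp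
qed

lemma crat_constant:
  assumes "crat S f" "T \<subseteq> S" "infinite T" "\<And>s. s \<in> T \<Longrightarrow> f s = c"
  shows "\<And>s. s \<in> S \<Longrightarrow> f s = c"
  using crat_zero[OF crat_diff[OF assms(1) crat_const[of S c]] assms(2,3)] assms(4) by simp

lemma open_infinite: "open (S :: real set) \<Longrightarrow> S \<noteq> {} \<Longrightarrow> infinite S"
  using finite_imp_not_open by blast

lemma ratpoly_deriv:
  fixes N M :: "complex poly"
  assumes "poly M (of_real s) \<noteq> 0"
  shows "((\<lambda>s. poly N (of_real s) / poly M (of_real s)) has_vector_derivative
     (poly (pderiv N * M - N * pderiv M) (of_real s) / (poly M (of_real s))^2)) (at s)"
proof -
  have "((\<lambda>z. poly N z / poly M z) has_field_derivative
     (poly (pderiv N) (of_real s) * poly M (of_real s) - poly N (of_real s) * poly (pderiv M) (of_real s))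
       / (poly M (of_real s) * poly M (of_real s))) (at (of_real s))"
    by (rule DERIV_divide[OF poly_DERIV poly_DERIV assms])
  from has_vector_derivative_real_field[OF this]
  show ?thesis by (simp add: power2_eq_square)
qed

lemma crat_deriv:
  assumes "open S" "crat S f"
  shows "\<exists>f'. crat S f' \<and> (\<forall>s\<in>S. (f has_vector_derivative f' s) (at s))"
proof -
  obtain N M where 1: "\<And>s. s \<in> S \<Longrightarrow> poly M (of_real s) \<noteq> 0"
    "\<And>s. s \<in> S \<Longrightarrow> f s = poly N (of_real s) / poly M (of_real s)"
    using cratE[OF assms(2)] by metis
  define f' where "f' s = poly (pderiv N * M - N * pderiv M) (of_real s) / (poly (M^2) (of_real s))" for s
  have "crat S f'"
    by (rule cratI[where N="pderiv N * M - N * pderiv M" and M="M^2"]) (simp_all add: f'_def 1)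
  moreover have "(f has_vector_derivative f' s) (at s)" if "s \<in> S" for s
  proof -
    have "((\<lambda>s. poly N (of_real s) / poly M (of_real s)) has_vector_derivative f' s) (at s)"
      using ratpoly_deriv[OF 1(1)[OF that], of N] by (simp add: f'_def)
    then show ?thesis
      by (rule has_vector_derivative_transform_within_open[OF _ assms(1) that]) (simp add: 1)
  qed
  ultimately show ?thesis by blast
qed


lemma frac_clear: "(m::'a::field) \<noteq> 0 \<Longrightarrow> b \<noteq> 0 \<Longrightarrow> l / m^2 + w / b^2 * (n / m) = 0 \<Longrightarrow> l * b^2 + w * n * m = 0"
proof -
  assume m: "m \<noteq> 0" and b: "b \<noteq> 0" and e: "l / m^2 + w / b^2 * (n / m) = 0"
  have "(l / m^2 + w / b^2 * (n / m)) * (m^2 * b^2) = l * b^2 + w * n * m"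
    using m b by (simp add: divide_simps power2_eq_square)
  then show ?thesis using e by simp
qed

lemma trans_lemma:
  assumes S: "open S" "convex S"
    and cg: "crat S g" and ch: "crat S h"
    and dg: "\<And>s. s \<in> S \<Longrightarrow> (g has_vector_derivative g' s) (at s)"
    and dh: "\<And>s. s \<in> S \<Longrightarrow> (h has_vector_derivative h' s) (at s)"
    and eq: "\<And>s. s \<in> S \<Longrightarrow> g' s + h' s * g s = 0"
  shows "(\<forall>s\<in>S. g s = 0) \<or> (\<exists>c. \<forall>s\<in>S. h s = c)"
proof (cases "S = {}")
  case True then show ?thesis by simp
next
  case False
  then have inf: "infinite S" using open_infinite S by auto
  obtain N M where NM': "\<forall>s\<in>S. poly M (of_real s) \<noteq> 0 \<and> g s = poly N (of_real s) / poly M (of_real s)"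
    using cg unfolding crat_def by blast
  obtain A B where AB': "\<forall>s\<in>S. poly B (of_real s) \<noteq> 0 \<and> h s = poly A (of_real s) / poly B (of_real s)"
    using ch unfolding crat_def by blast
  have NM: "\<And>s. s \<in> S \<Longrightarrow> poly M (of_real s) \<noteq> 0"
    "\<And>s. s \<in> S \<Longrightarrow> g s = poly N (of_real s) / poly M (of_real s)" using NM' by auto
  have AB: "\<And>s. s \<in> S \<Longrightarrow> poly B (of_real s) \<noteq> 0"
    "\<And>s. s \<in> S \<Longrightarrow> h s = poly A (of_real s) / poly B (of_real s)" using AB' by auto
  define L where "L = pderiv N * M - N * pderiv M"
  define Wh where "Wh = pderiv A * B - A * pderiv B"
  have g'e: "g' s = poly L (of_real s) / (poly M (of_real s))^2" if "s \<in> S" for s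
  proof -
    have "(g has_vector_derivative (poly L (of_real s) / (poly M (of_real s))^2)) (at s)"
      unfolding L_def
      by (rule has_vector_derivative_transform_within_open[OF ratpoly_deriv[OF NM(1)[OF that]] S(1) that])
        (simp add: NM(2))
    then show ?thesis by (rule vector_derivative_unique_at[OF dg[OF that]])
  qed
  have h'e: "h' s = poly Wh (of_real s) / (poly B (of_real s))^2" if "s \<in> S" for s
  proof -
    have "(h has_vector_derivative (poly Wh (of_real s) / (poly B (of_real s))^2)) (at s)"
      unfolding Wh_def
      by (rule has_vector_derivative_transform_within_open[OF ratpoly_deriv[OF AB(1)[OF that]] S(1) that])
        (simp add: AB(2))
    then show ?thesis by (rule vector_derivative_unique_at[OF dh[OF that]])
  qed
  have pz: "poly (L * B^2 + Wh * N * M) (of_real s) = 0" if s: "s \<in> S" for s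
  proof -
    have e: "poly L (of_real s) / (poly M (of_real s))^2 + poly Wh (of_real s) / (poly B (of_real s))^2 * (poly N (of_real s) / poly M (of_real s)) = 0"
      using eq[OF s] unfolding g'e[OF s] h'e[OF s] NM(2)[OF s] .
    have "poly L (of_real s) * (poly B (of_real s))^2 + poly Wh (of_real s) * poly N (of_real s) * poly M (of_real s) = 0"
      by (rule frac_clear[OF NM(1)[OF s] AB(1)[OF s] e])
    then show ?thesis by simp
  qed
  have P0: "L * B^2 + Wh * N * M = 0" by (rule poly_zero_inf[OF inf pz])
  obtain s0 where s0: "s0 \<in> S" using False by blast
  have M0: "M \<noteq> 0" using NM(1)[OF s0] by auto
  have B0: "B \<noteq> 0" using AB(1)[OF s0] by auto
  show ?thesis
  proof (cases "N = 0")
    case True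
    then show ?thesis using NM(2) by simp
  next
    case False
    have "Wh = 0"
      unfolding Wh_def by (rule core[OF False M0 B0 P0[unfolded L_def Wh_def]])
    then have h'0: "h' s = 0" if "s \<in> S" for s using h'e[OF that] by simp
    have "\<exists>c. \<forall>s\<in>S. h s = c"
    proof (rule has_derivative_zero_constant[OF S(2)])
      fix x assume x: "x \<in> S"
      from dh[OF x] h'0[OF x] have "(h has_derivative (\<lambda>y. 0)) (at x)"
        by (simp add: has_vector_derivative_def)
      then show "(h has_derivative (\<lambda>y. 0)) (at x within S)"
        by (rule has_derivative_at_withinI)
    qed
    then show ?thesis by blast
  qed
qed


lemma div_helper: "(E::'a::field) \<noteq> 0 \<Longrightarrow> E + X = 0 \<Longrightarrow> X / E = -1"
proof -
  assume "E \<noteq> 0" "E + X = 0"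
  then have "X = - E" by (simp add: eq_neg_iff_add_eq_0 add.commute)
  then show ?thesis using \<open>E \<noteq> 0\<close> by simp
qed

lemma dz2: "(b::'a::field) \<noteq> 0 \<Longrightarrow> a / b = 0 \<Longrightarrow> a = 0"
  by simp

lemma indep:
  assumes "finite K" "open S" "convex S"
    "\<forall>k\<in>K. crat S (R k) \<and> crat S (g k)"
    "\<forall>k\<in>K. \<forall>l\<in>K. k \<noteq> l \<longrightarrow> \<not>(\<exists>c. \<forall>s\<in>S. g k s - g l s = c)"
    "\<forall>s\<in>S. (\<Sum>k\<in>K. R k s * exp (g k s)) = 0"
  shows "\<forall>k\<in>K. \<forall>s\<in>S. R k s = 0"
  using assms
proof (induction K arbitrary: S R g rule: finite_induct)
  case empty then show ?case by simp
next
  case (insert k1 K S R g)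
  have cr: "crat S (R k)" "crat S (g k)" if "k \<in> insert k1 K" for k
    using insert.prems(3) that by auto
  have nc: "\<not>(\<exists>c. \<forall>s\<in>S. g k s - g l s = c)" if "k \<in> insert k1 K" "l \<in> insert k1 K" "k \<noteq> l" for k l
    using insert.prems(4) that by blast
  have sum0: "R k1 s * exp (g k1 s) + (\<Sum>k\<in>K. R k s * exp (g k s)) = 0" if "s \<in> S" for s
    using insert.prems(5) that by (simp add: sum.insert[OF insert.hyps(1,2)])
  show ?case
  proof (cases "\<forall>s\<in>S. R k1 s = 0")
    case True
    have "\<forall>s\<in>S. (\<Sum>k\<in>K. R k s * exp (g k s)) = 0" using sum0 True by simp
    then have "\<forall>k\<in>K. \<forall>s\<in>S. R k s = 0"
    proof (intro insert.IH[OF insert.prems(1,2)])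
      show "\<forall>k\<in>K. crat S (R k) \<and> crat S (g k)" using cr by simp
      show "\<forall>k\<in>K. \<forall>l\<in>K. k \<noteq> l \<longrightarrow> \<not>(\<exists>c. \<forall>s\<in>S. g k s - g l s = c)"
        using nc by simp
    qed
    then show ?thesis using True by blast
  next
    case False
    then obtain s1 where s1: "s1 \<in> S" "R k1 s1 \<noteq> 0" by blast
    obtain N M where NM: "\<forall>s\<in>S. poly M (of_real s) \<noteq> 0 \<and> R k1 s = poly N (of_real s) / poly M (of_real s)"
      using cr(1)[of k1] unfolding crat_def by blast
    define Z where "Z = (of_real :: real \<Rightarrow> complex) -` {x. poly N x = 0}"
    have "poly N (of_real s1) \<noteq> 0" using NM s1 by auto
    then have "N \<noteq> 0" by auto
    then have "finite {x. poly N x = 0}" by (rule poly_roots_finite)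
    then have fZ: "finite Z" unfolding Z_def by (rule finite_vimageI) (simp add: inj_def)
    have "open (S - Z)" using insert.prems(1) fZ by (simp add: open_Diff finite_imp_closed)
    moreover have "s1 \<in> S - Z" using s1 NM \<open>poly N (of_real s1) \<noteq> 0\<close> by (simp add: Z_def)
    ultimately obtain e where e: "e > 0" "ball s1 e \<subseteq> S - Z" by (meson openE)
    define S2 where "S2 = ball s1 e"
    have S2: "open S2" "convex S2" "S2 \<subseteq> S" "S2 \<noteq> {}" using e by (auto simp: S2_def)
    have infS2: "infinite S2" using open_infinite S2 by auto
    have R1nz: "R k1 s \<noteq> 0" if "s \<in> S2" for s
    proof -
      have "s \<in> S" "s \<notin> Z" using that e by (auto simp: S2_def)
      then have "poly N (of_real s) \<noteq> 0" "poly M (of_real s) \<noteq> 0" using NM by (auto simp: Z_def)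
      moreover have "R k1 s = poly N (of_real s) / poly M (of_real s)" using NM \<open>s \<in> S\<close> by auto
      ultimately show ?thesis by simp
    qed
    define Sf where "Sf k s = R k s / R k1 s" for k s
    define h where "h k s = g k s - g k1 s" for k s
    have crS: "crat S2 (Sf k)" "crat S2 (h k)" if "k \<in> K" for k
    proof -
      show "crat S2 (Sf k)" unfolding Sf_def
        by (rule crat_divide) (use crat_mono[OF cr(1) S2(3)] R1nz that in auto)
      show "crat S2 (h k)" unfolding h_def
        by (rule crat_diff) (use crat_mono[OF cr(2) S2(3)] that in auto)
    qed
    have id: "(\<Sum>k\<in>K. Sf k s * exp (h k s)) = -1" if s: "s \<in> S2" for s
    proof -
      define E where "E = R k1 s * exp (g k1 s)"
      have E0: "E \<noteq> 0" using R1nz[OF s] by (simp add: E_def)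
      have "(\<Sum>k\<in>K. Sf k s * exp (h k s)) = (\<Sum>k\<in>K. R k s * exp (g k s) / E)"
        by (rule sum.cong) (simp_all only: Sf_def h_def E_def exp_diff times_divide_times_eq)
      also have "\<dots> = (\<Sum>k\<in>K. R k s * exp (g k s)) / E" by (rule sum_divide_distrib[symmetric])
      also have "\<dots> = -1" by (rule div_helper[OF E0]) (use sum0 S2(3) s in \<open>auto simp: E_def\<close>)
      finally show ?thesis .
    qed
    have "\<forall>k\<in>K. \<exists>f'. crat S2 f' \<and> (\<forall>s\<in>S2. (Sf k has_vector_derivative f' s) (at s))"
      using crat_deriv[OF S2(1)] crS by blast
    then obtain Sf' where Sf': "\<forall>k\<in>K. crat S2 (Sf' k) \<and> (\<forall>s\<in>S2. (Sf k has_vector_derivative Sf' k s) (at s))"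
      by (metis bchoice)
    have "\<forall>k\<in>K. \<exists>f'. crat S2 f' \<and> (\<forall>s\<in>S2. (h k has_vector_derivative f' s) (at s))"
      using crat_deriv[OF S2(1)] crS by blast
    then obtain h' where h': "\<forall>k\<in>K. crat S2 (h' k) \<and> (\<forall>s\<in>S2. (h k has_vector_derivative h' k s) (at s))"
      by (metis bchoice)
    define T where "T k s = Sf' k s + h' k s * Sf k s" for k s
    have crT: "crat S2 (T k)" if "k \<in> K" for k
      unfolding T_def using Sf' h' crS that by (auto intro!: crat_add crat_mult)
    have Tsum: "(\<Sum>k\<in>K. T k s * exp (h k s)) = 0" if s: "s \<in> S2" for s
    proof -
      have d1: "((\<lambda>s. \<Sum>k\<in>K. Sf k s * exp (h k s)) has_vector_derivative
                 (\<Sum>k\<in>K. Sf k s * (h' k s * exp (h k s)) + Sf' k s * exp (h k s))) (at s)"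
      proof (rule has_vector_derivative_sum)
        fix k assume k: "k \<in> K"
        have de: "((\<lambda>s. exp (h k s)) has_vector_derivative (h' k s * exp (h k s))) (at s)"
          using field_vector_diff_chain_at[OF bspec[OF conjunct2[OF bspec[OF h' k]] s] DERIV_exp]
          by (simp add: o_def)
        show "((\<lambda>s. Sf k s * exp (h k s)) has_vector_derivative
               (Sf k s * (h' k s * exp (h k s)) + Sf' k s * exp (h k s))) (at s)"
          by (rule has_vector_derivative_mult[OF bspec[OF conjunct2[OF bspec[OF Sf' k]] s] de])
      qed
      have d2: "((\<lambda>s. \<Sum>k\<in>K. Sf k s * exp (h k s)) has_vector_derivative 0) (at s)"
        by (rule has_vector_derivative_transform_within_open[OF has_vector_derivative_const S2(1) s])
          (simp add: id)
      have "(\<Sum>k\<in>K. Sf k s * (h' k s * exp (h k s)) + Sf' k s * exp (h k s)) = 0"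
        using vector_derivative_unique_at[OF d1 d2] .
      moreover have "(\<Sum>k\<in>K. Sf k s * (h' k s * exp (h k s)) + Sf' k s * exp (h k s)) = (\<Sum>k\<in>K. T k s * exp (h k s))"
        by (rule sum.cong) (simp_all add: T_def algebra_simps)
      ultimately show ?thesis by simp
    qed
    have ncS2: "\<not>(\<exists>c. \<forall>s\<in>S2. h k s - h l s = c)" if kl: "k \<in> K" "l \<in> K" "k \<noteq> l" for k l
    proof
      assume "\<exists>c. \<forall>s\<in>S2. h k s - h l s = c"
      then obtain c where c: "\<forall>s\<in>S2. h k s - h l s = c" by blast
      have kk: "k \<in> insert k1 K" "l \<in> insert k1 K" using kl by simp_all
      have cd: "crat S (\<lambda>s. g k s - g l s)" by (rule crat_diff[OF cr(2)[OF kk(1)] cr(2)[OF kk(2)]])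
      have "g k s - g l s = c" if "s \<in> S" for s
      proof (rule crat_constant[OF cd S2(3) infS2 _ that])
        fix s assume "s \<in> S2"
        then have "h k s - h l s = c" using c by blast
        then show "g k s - g l s = c" by (simp add: h_def)
      qed
      then have "\<exists>c. \<forall>s\<in>S. g k s - g l s = c" by blast
      then show False using nc[OF kk kl(3)] by blast
    qed
    have T0: "\<forall>k\<in>K. \<forall>s\<in>S2. T k s = 0"
    proof (intro insert.IH[OF S2(1,2)])
      show "\<forall>k\<in>K. crat S2 (T k) \<and> crat S2 (h k)" using crT crS by blast
      show "\<forall>k\<in>K. \<forall>l\<in>K. k \<noteq> l \<longrightarrow> \<not>(\<exists>c. \<forall>s\<in>S2. h k s - h l s = c)"
        using ncS2 by blast
      show "\<forall>s\<in>S2. (\<Sum>k\<in>K. T k s * exp (h k s)) = 0" using Tsum by blast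
    qed
    have Rk0: "\<forall>s\<in>S. R k s = 0" if k: "k \<in> K" for k
    proof -
      have Sfd: "\<And>s. s \<in> S2 \<Longrightarrow> (Sf k has_vector_derivative Sf' k s) (at s)" using Sf' k by blast
      have hd: "\<And>s. s \<in> S2 \<Longrightarrow> (h k has_vector_derivative h' k s) (at s)" using h' k by blast
      have Te: "\<And>s. s \<in> S2 \<Longrightarrow> Sf' k s + h' k s * Sf k s = 0" using T0 k unfolding T_def by blast
      have alt: "(\<forall>s\<in>S2. Sf k s = 0) \<or> (\<exists>c. \<forall>s\<in>S2. h k s = c)"
        by (rule trans_lemma[OF S2(1,2) crS(1)[OF k] crS(2)[OF k] Sfd hd Te])
      have kk: "k \<in> insert k1 K" "k1 \<in> insert k1 K" using k by simp_all
      have kne: "k \<noteq> k1" using k insert.hyps(2) by auto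
      have "\<not>(\<exists>c. \<forall>s\<in>S2. h k s = c)"
      proof
        assume "\<exists>c. \<forall>s\<in>S2. h k s = c"
        then obtain c where c: "\<forall>s\<in>S2. h k s = c" by blast
        have cd: "crat S (\<lambda>s. g k s - g k1 s)" by (rule crat_diff[OF cr(2)[OF kk(1)] cr(2)[OF kk(2)]])
        have "g k s - g k1 s = c" if "s \<in> S" for s
        proof (rule crat_constant[OF cd S2(3) infS2 _ that])
          fix s assume "s \<in> S2"
          then have "h k s = c" using c by blast
          then show "g k s - g k1 s = c" by (simp add: h_def)
        qed
        then have "\<exists>c. \<forall>s\<in>S. g k s - g k1 s = c" by blast
        then show False using nc[OF kk kne] by blast
      qed
      with alt have "\<forall>s\<in>S2. Sf k s = 0" by blast
      then have z2: "\<And>s. s \<in> S2 \<Longrightarrow> R k s = 0" using R1nz unfolding Sf_def by (metis dz2)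
      have "R k s = 0" if "s \<in> S" for s
        by (rule crat_zero[OF cr(1)[OF kk(1)] S2(3) infS2 z2 that])
      then show ?thesis by blast
    qed
    have "\<forall>s\<in>S. R k1 s = 0"
    proof
      fix s assume s: "s \<in> S"
      have "(\<Sum>k\<in>K. R k s * exp (g k s)) = (\<Sum>k\<in>K. 0)"
        by (rule sum.cong) (use Rk0 s in auto)
      then have "R k1 s * exp (g k1 s) = 0" using sum0[OF s] by simp
      then show "R k1 s = 0" by (simp only: mult_eq_0_iff exp_not_eq_zero) simp
    qed
    then show ?thesis using Rk0 by blast
  qed
qed


lemma rpf_crat:
  fixes f :: "real^'m::finite \<Rightarrow> real"
  assumes "real_poly_fun f"
  shows "crat S (\<lambda>s. complex_of_real (f (t + s *\<^sub>R w)))"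
proof -
  obtain A and c :: "('m \<Rightarrow> nat) \<Rightarrow> real" where A: "finite A"
    and f: "\<And>x. f x = (\<Sum>\<alpha>\<in>A. c \<alpha> * (\<Prod>i\<in>UNIV. (x $ i) ^ (\<alpha> i)))"
    using assms unfolding real_poly_fun_def by blast
  have "crat S (\<lambda>s. \<Sum>\<alpha>\<in>A. complex_of_real (c \<alpha>) * (\<Prod>i\<in>UNIV.
           (complex_of_real (t $ i) + of_real s * complex_of_real (w $ i)) ^ (\<alpha> i)))"
    by (intro crat_sum A crat_mult crat_const crat_prod finite crat_power crat_add crat_id)
  then show ?thesis
    by (rule crat_cong) (simp add: f)
qed

lemma rpf_cont:
  fixes f :: "real^'m::finite \<Rightarrow> real"
  assumes "real_poly_fun f"
  shows "continuous_on X f"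
proof -
  obtain A and c :: "('m \<Rightarrow> nat) \<Rightarrow> real" where A: "finite A"
    and f: "\<And>x. f x = (\<Sum>\<alpha>\<in>A. c \<alpha> * (\<Prod>i\<in>UNIV. (x $ i) ^ (\<alpha> i)))"
    using assms unfolding real_poly_fun_def by blast
  have "continuous_on X (\<lambda>x. \<Sum>\<alpha>\<in>A. c \<alpha> * (\<Prod>i\<in>UNIV. (x $ i) ^ (\<alpha> i)))"
    by (intro continuous_intros)
  then show ?thesis using f by simp
qed

lemma cpf_crat:
  fixes p :: "real^'n::finite \<Rightarrow> complex"
  assumes "complex_poly_fun p" "\<And>i. crat S (\<lambda>s. complex_of_real (X s $ i))"
  shows "crat S (\<lambda>s. p (X s))"
proof -
  obtain A and c :: "('n \<Rightarrow> nat) \<Rightarrow> complex" where A: "finite A"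
    and p: "\<And>x. p x = (\<Sum>\<alpha>\<in>A. c \<alpha> * (\<Prod>i\<in>UNIV. complex_of_real ((x $ i) ^ (\<alpha> i))))"
    using assms(1) unfolding complex_poly_fun_def by blast
  have "crat S (\<lambda>s. \<Sum>\<alpha>\<in>A. c \<alpha> * (\<Prod>i\<in>UNIV. (complex_of_real (X s $ i)) ^ (\<alpha> i)))"
    by (intro crat_sum A crat_mult crat_const crat_prod finite crat_power assms(2))
  then show ?thesis
    by (rule crat_cong) (simp add: p)
qed


definition sig :: "('n::finite \<Rightarrow> real^'m::finite \<Rightarrow> real) \<Rightarrow> ('n \<Rightarrow> real^'m \<Rightarrow> real) \<Rightarrow> real^'m \<Rightarrow> real^'n"
  where "sig a b t = (\<chi> j. a j t / b j t)"

lemma sig_crat: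
  fixes a b :: "'n::finite \<Rightarrow> real^'m::finite \<Rightarrow> real"
  assumes a_poly: "\<And>j. real_poly_fun (a j)" and b_poly: "\<And>j. real_poly_fun (b j)"
    and b_nz: "\<And>j t. t \<in> D \<Longrightarrow> b j t \<noteq> 0"
    and inD: "\<And>s. s \<in> S \<Longrightarrow> t + s *\<^sub>R w \<in> D"
  shows "crat S (\<lambda>s. complex_of_real (sig a b (t + s *\<^sub>R w) $ j))"
proof -
  have "crat S (\<lambda>s. complex_of_real (a j (t + s *\<^sub>R w)) / complex_of_real (b j (t + s *\<^sub>R w)))"
    by (rule crat_divide[OF rpf_crat[OF a_poly] rpf_crat[OF b_poly]]) (simp add: b_nz inD)
  then show ?thesis by (rule crat_cong) (simp add: sig_def)
qed

lemma phase_crat: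
  fixes a b :: "'n::finite \<Rightarrow> real^'m::finite \<Rightarrow> real"
  assumes a_poly: "\<And>j. real_poly_fun (a j)" and b_poly: "\<And>j. real_poly_fun (b j)"
    and b_nz: "\<And>j t. t \<in> D \<Longrightarrow> b j t \<noteq> 0"
    and inD: "\<And>s. s \<in> S \<Longrightarrow> t + s *\<^sub>R w \<in> D"
  shows "crat S (\<lambda>s. complex_of_real (inner c (sig a b (t + s *\<^sub>R w))))"
proof -
  have "crat S (\<lambda>s. \<Sum>i\<in>UNIV. complex_of_real (c $ i) * complex_of_real (sig a b (t + s *\<^sub>R w) $ i))"
    by (intro crat_sum finite crat_mult crat_const sig_crat[OF a_poly b_poly b_nz inD])
  then show ?thesis by (rule crat_cong) (simp add: inner_vec_def)
qed

lemma const_ext: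
  fixes a b :: "'n::finite \<Rightarrow> real^'m::finite \<Rightarrow> real"
  assumes a_poly: "\<And>j. real_poly_fun (a j)" and b_poly: "\<And>j. real_poly_fun (b j)"
    and b_nz: "\<And>j t. t \<in> D \<Longrightarrow> b j t \<noteq> 0"
    and UD: "U \<subseteq> D" and V: "open V" "V \<noteq> {}" "V \<subseteq> U"
    and cV: "\<forall>t\<in>V. inner c (sig a b t) = c0"
  shows "\<forall>t\<in>U. inner c (sig a b t) = c0"
proof
  fix t assume tU: "t \<in> U"
  obtain t2 where t2: "t2 \<in> V" using V(2) by blast
  obtain \<rho> where rho: "\<rho> > 0" "ball t2 \<rho> \<subseteq> V" using V(1) t2 by (meson openE)
  define w where "w = t - t2"
  define \<delta> where "\<delta> = \<rho> / (norm w + 1)"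
  have "norm w + 1 > 0" by (simp add: add_nonneg_pos)
  then have dpos: "\<delta> > 0" using rho(1) unfolding \<delta>_def by (metis divide_pos_pos)
  have dw: "\<delta> * norm w < \<rho>"
  proof -
    have "\<delta> * norm w = \<rho> * (norm w / (norm w + 1))" by (simp add: \<delta>_def)
    also have "\<dots> < \<rho> * 1"
    proof (intro mult_strict_left_mono rho(1))
      have "norm w + 1 > 0" by (simp add: add_nonneg_pos)
      then show "norm w / (norm w + 1) < 1" by (subst divide_less_eq_1_pos) auto
    qed
    finally show ?thesis by simp
  qed
  define S where "S = ball (0::real) \<delta> \<union> {1}"
  have inV: "t2 + s *\<^sub>R w \<in> V" if "s \<in> ball 0 \<delta>" for s
  proof -
    have "norm (s *\<^sub>R w) = \<bar>s\<bar> * norm w" by simp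
    also have "\<dots> \<le> \<delta> * norm w" using that by (intro mult_right_mono) auto
    finally have "dist t2 (t2 + s *\<^sub>R w) < \<rho>" using dw by (simp add: dist_norm)
    then show ?thesis using rho(2) by auto
  qed
  have inD: "t2 + s *\<^sub>R w \<in> D" if "s \<in> S" for s
  proof (cases "s = 1")
    case True then show ?thesis using tU UD by (auto simp: w_def)
  next
    case False then show ?thesis using that inV V(3) UD by (auto simp: S_def)
  qed
  have cr: "crat S (\<lambda>s. complex_of_real (inner c (sig a b (t2 + s *\<^sub>R w))))"
    by (rule phase_crat[OF a_poly b_poly b_nz inD])
  have sub: "ball 0 \<delta> \<subseteq> S" by (auto simp: S_def)
  have inf: "infinite (ball (0::real) \<delta>)" using dpos by (intro open_infinite) auto
  have one: "1 \<in> S" by (simp add: S_def)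
  have "complex_of_real (inner c (sig a b (t2 + 1 *\<^sub>R w))) = complex_of_real c0"
    by (rule crat_constant[OF cr sub inf _ one]) (use inV cV in auto)
  then show "inner c (sig a b t) = c0" by (simp add: w_def)
qed

lemma choose_point:
  fixes F :: "'p \<Rightarrow> 'a::topological_space \<Rightarrow> real"
  assumes "finite P"
  shows "open V \<Longrightarrow> V \<noteq> {} \<Longrightarrow> V \<subseteq> U \<Longrightarrow> (\<forall>\<pi>\<in>P. continuous_on U (F \<pi>)) \<Longrightarrow>
    (\<forall>\<pi>\<in>P. \<forall>V'. open V' \<and> V' \<noteq> {} \<and> V' \<subseteq> U \<longrightarrow> (\<exists>t\<in>V'. F \<pi> t \<noteq> y \<pi>)) \<Longrightarrow>
    \<exists>t\<in>V. \<forall>\<pi>\<in>P. F \<pi> t \<noteq> y \<pi>"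
  using assms
proof (induction P arbitrary: V rule: finite_induct)
  case empty then show ?case by auto
next
  case (insert p P V)
  obtain t where t: "t \<in> V" "F p t \<noteq> y p" using insert.prems by blast
  define V' where "V' = V \<inter> F p -` (- {y p})"
  have "continuous_on V (F p)" using insert.prems(3,4) continuous_on_subset by blast
  then have "open V'" unfolding V'_def using insert.prems(1) by (intro continuous_open_preimage) auto
  moreover have "V' \<noteq> {}" using t by (auto simp: V'_def)
  moreover have "V' \<subseteq> U" using insert.prems(3) by (auto simp: V'_def)
  ultimately obtain t1 where "t1 \<in> V'" "\<forall>\<pi>\<in>P. F \<pi> t1 \<noteq> y \<pi>"
    using insert.IH insert.prems(4,5) by blast
  then show ?case by (auto simp: V'_def)
qed


theorem theorem4:
  fixes a b :: "'n::finite \<Rightarrow> real^'m::finite \<Rightarrow> real"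
    and D U :: "(real^'m) set"
    and m :: nat
    and v :: "nat \<Rightarrow> real^'n"
    and p q :: "nat \<Rightarrow> real^'n \<Rightarrow> complex"
  assumes dim: "CARD('n) = CARD('m) + 1"
    and n2: "CARD('n) \<ge> 2"
    and a_poly: "\<And>j. real_poly_fun (a j)"
    and b_poly: "\<And>j. real_poly_fun (b j)"
    and b_nz: "\<And>j t. t \<in> D \<Longrightarrow> b j t \<noteq> 0"
    and O_open: "open U" and O_sub: "U \<subseteq> D"
    and not_hyp: "\<not> in_some_hyperplane ((\<lambda>t. \<chi> j. a j t / b j t) ` U)"
    and v_dist: "inj_on v {1..m}"
    and p_poly: "\<And>k. complex_poly_fun (p k)"
    and q_poly: "\<And>k. complex_poly_fun (q k)"
    and q_nz: "\<And>k x. k \<in> {1..m} \<Longrightarrow> x \<in> (\<lambda>t. \<chi> j. a j t / b j t) ` U \<Longrightarrow> q k x \<noteq> 0"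
    and sum0: "\<And>x. x \<in> (\<lambda>t. \<chi> j. a j t / b j t) ` U \<Longrightarrow>
       (\<Sum>k=1..m. (p k x / q k x) * exp (- \<i> * complex_of_real (inner (v k) x))) = 0"
  shows "\<forall>k\<in>{1..m}. \<forall>x\<in>(\<lambda>t. \<chi> j. a j t / b j t) ` U. p k x / q k x = 0"
proof (intro ballI)
  fix k0 x assume k0: "k0 \<in> {1..m}" and x: "x \<in> (\<lambda>t. \<chi> j. a j t / b j t) ` U"
  have sigeq: "(\<lambda>t. \<chi> j. a j t / b j t) = sig a b" by (rule ext) (simp add: sig_def)
  obtain t0 where t0: "t0 \<in> U" "x = sig a b t0" using x unfolding sigeq by auto
  have inimg: "sig a b t \<in> (\<lambda>t. \<chi> j. a j t / b j t) ` U" if "t \<in> U" for t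
    unfolding sigeq using that by blast
  define P where "P = {(k,l). k \<in> {1..m} \<and> l \<in> {1..m} \<and> k \<noteq> l}"
  define F where "F \<pi> t = inner (v (fst \<pi>) - v (snd \<pi>)) (sig a b t)" for \<pi> t
  have finP: "finite P"
    by (rule finite_subset[of _ "{1..m} \<times> {1..m}"]) (auto simp: P_def)
  have contF: "\<forall>\<pi>\<in>P. continuous_on U (F \<pi>)"
  proof
    fix \<pi> assume "\<pi> \<in> P"
    define c where "c = v (fst \<pi>) - v (snd \<pi>)"
    have "continuous_on U (\<lambda>t. \<Sum>i\<in>UNIV. c $ i * (a i t / b i t))"
      by (intro continuous_on_sum continuous_on_mult continuous_on_const continuous_on_divide rpf_cont a_poly b_poly)
        (use b_nz O_sub in auto)
    moreover have "F \<pi> t = (\<Sum>i\<in>UNIV. c $ i * (a i t / b i t))" for t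
      by (simp add: F_def c_def inner_vec_def sig_def)
    ultimately show "continuous_on U (F \<pi>)" by simp
  qed
  have ncF: "\<forall>\<pi>\<in>P. \<forall>V'. open V' \<and> V' \<noteq> {} \<and> V' \<subseteq> U \<longrightarrow> (\<exists>t\<in>V'. F \<pi> t \<noteq> F \<pi> t0)"
  proof (intro ballI allI impI)
    fix \<pi> V' assume pi: "\<pi> \<in> P" and V': "open V' \<and> V' \<noteq> {} \<and> V' \<subseteq> U"
    show "\<exists>t\<in>V'. F \<pi> t \<noteq> F \<pi> t0"
    proof (rule ccontr)
      assume neg: "\<not> ?thesis"
      define c0 where "c0 = F \<pi> t0"
      have "\<forall>t\<in>V'. F \<pi> t = c0" using neg unfolding c0_def by blast
      then have cV: "\<forall>t\<in>V'. inner (v (fst \<pi>) - v (snd \<pi>)) (sig a b t) = c0" unfolding F_def .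
      have V'1: "open V'" "V' \<noteq> {}" "V' \<subseteq> U" using V' by simp_all
      have all: "\<forall>t\<in>U. inner (v (fst \<pi>) - v (snd \<pi>)) (sig a b t) = c0"
        by (rule const_ext[OF a_poly b_poly b_nz O_sub V'1 cV])
      obtain k l where kl: "\<pi> = (k,l)" "k \<in> {1..m}" "l \<in> {1..m}" "k \<noteq> l" using pi unfolding P_def by blast
      have "v k \<noteq> v l" using inj_onD[OF v_dist _ kl(2,3)] kl(4) by blast
      then have "v (fst \<pi>) \<noteq> v (snd \<pi>)" using kl(1) by simp
      then have "v (fst \<pi>) - v (snd \<pi>) \<noteq> 0" by simp
      have "sig a b ` U \<subseteq> {y. inner (v (fst \<pi>) - v (snd \<pi>)) y = c0}" using all by auto
      then have "in_some_hyperplane (sig a b ` U)"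
        unfolding in_some_hyperplane_def using \<open>v (fst \<pi>) - v (snd \<pi>) \<noteq> 0\<close> by blast
      then have "in_some_hyperplane ((\<lambda>t. \<chi> j. a j t / b j t) ` U)" unfolding sigeq .
      then show False using not_hyp by contradiction
    qed
  qed
  have Une: "U \<noteq> {}" using t0(1) by blast
  obtain t1 where t1: "t1 \<in> U" "\<forall>\<pi>\<in>P. F \<pi> t1 \<noteq> F \<pi> t0"
    using choose_point[OF finP O_open Une subset_refl contF ncF] by blast
  obtain \<rho> where rho: "\<rho> > 0" "ball t0 \<rho> \<subseteq> U" using O_open t0(1) by (meson openE)
  define w where "w = t1 - t0"
  define \<delta> where "\<delta> = \<rho> / (norm w + 1)"
  have "norm w + 1 > 0" by (simp add: add_nonneg_pos)
  then have dpos: "\<delta> > 0" using rho(1) unfolding \<delta>_def by (metis divide_pos_pos)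
  have dw: "\<delta> * norm w < \<rho>"
  proof -
    have "\<delta> * norm w = \<rho> * (norm w / (norm w + 1))" by (simp add: \<delta>_def)
    also have "\<dots> < \<rho> * 1"
    proof (intro mult_strict_left_mono rho(1))
      have "norm w + 1 > 0" by (simp add: add_nonneg_pos)
      then show "norm w / (norm w + 1) < 1" by (subst divide_less_eq_1_pos) auto
    qed
    finally show ?thesis by simp
  qed
  define J where "J = ball (0::real) \<delta>"
  define S where "S = J \<union> {1}"
  have inU: "t0 + s *\<^sub>R w \<in> U" if "s \<in> S" for s
  proof (cases "s = 1")
    case True then show ?thesis using t1(1) by (auto simp: w_def)
  next
    case False
    then have sJ: "s \<in> J" using that by (auto simp: S_def)
    have "norm (s *\<^sub>R w) = \<bar>s\<bar> * norm w" by simp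
    also have "\<dots> \<le> \<delta> * norm w" using sJ by (intro mult_right_mono) (auto simp: J_def)
    finally have "dist t0 (t0 + s *\<^sub>R w) < \<rho>" using dw by (simp add: dist_norm)
    then show ?thesis using rho(2) by auto
  qed
  have inD: "t0 + s *\<^sub>R w \<in> D" if "s \<in> S" for s using inU[OF that] O_sub by blast
  define R where "R k s = p k (sig a b (t0 + s *\<^sub>R w)) / q k (sig a b (t0 + s *\<^sub>R w))" for k s
  define g where "g k s = - \<i> * complex_of_real (inner (v k) (sig a b (t0 + s *\<^sub>R w)))" for k s
  have crR: "crat S (R k)" if k: "k \<in> {1..m}" for k
    unfolding R_def
  proof (rule crat_divide)
    show "crat S (\<lambda>s. p k (sig a b (t0 + s *\<^sub>R w)))"
      by (rule cpf_crat[OF p_poly sig_crat[OF a_poly b_poly b_nz inD]])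
    show "crat S (\<lambda>s. q k (sig a b (t0 + s *\<^sub>R w)))"
      by (rule cpf_crat[OF q_poly sig_crat[OF a_poly b_poly b_nz inD]])
    show "q k (sig a b (t0 + s *\<^sub>R w)) \<noteq> 0" if "s \<in> S" for s
      by (rule q_nz[OF k inimg[OF inU[OF that]]])
  qed
  have crg: "crat S (g k)" for k
    unfolding g_def by (rule crat_mult[OF crat_const phase_crat[OF a_poly b_poly b_nz inD]])
  have JS: "J \<subseteq> S" by (auto simp: S_def)
  have infJ: "infinite J" using dpos by (intro open_infinite) (auto simp: J_def)
  have zero: "0 \<in> J" using dpos by (simp add: J_def)
  have one: "1 \<in> S" by (simp add: S_def)
  have "\<forall>k\<in>{1..m}. \<forall>s\<in>J. R k s = 0"
  proof (rule indep)
    show "finite {1..m}" by simp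
    show "open J" by (simp add: J_def)
    show "convex J" by (simp add: J_def)
    show "\<forall>k\<in>{1..m}. crat J (R k) \<and> crat J (g k)"
      using crR crg crat_mono[OF _ JS] by blast
    show "\<forall>k\<in>{1..m}. \<forall>l\<in>{1..m}. k \<noteq> l \<longrightarrow> \<not>(\<exists>c. \<forall>s\<in>J. g k s - g l s = c)"
    proof (intro ballI impI notI)
      fix k l assume k: "k \<in> {1..m}" and l: "l \<in> {1..m}" and kl: "k \<noteq> l"
        and ex: "\<exists>c. \<forall>s\<in>J. g k s - g l s = c"
      then obtain c where c: "\<forall>s\<in>J. g k s - g l s = c" by blast
      have cd: "crat S (\<lambda>s. g k s - g l s)" by (rule crat_diff[OF crg crg])
      have e1: "g k 1 - g l 1 = c"
        by (rule crat_constant[OF cd JS infJ _ one]) (use c in blast)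
      have e0: "g k 0 - g l 0 = c" using c zero by blast
      have gd: "g k s - g l s = - \<i> * complex_of_real (F (k,l) (t0 + s *\<^sub>R w))" for s
        by (simp add: g_def F_def inner_diff_left algebra_simps)
      have "- \<i> * complex_of_real (F (k,l) t1) = - \<i> * complex_of_real (F (k,l) t0)"
        using e1 e0 gd[of 1] gd[of 0] by (simp add: w_def)
      then have "F (k,l) t1 = F (k,l) t0" by simp
      moreover have "(k,l) \<in> P" using k l kl by (simp add: P_def)
      ultimately show False using t1(2) by blast
    qed
    show "\<forall>s\<in>J. (\<Sum>k\<in>{1..m}. R k s * exp (g k s)) = 0"
    proof
      fix s assume "s \<in> J"
      then have "s \<in> S" using JS by blast
      then show "(\<Sum>k\<in>{1..m}. R k s * exp (g k s)) = 0"
        unfolding R_def g_def by (rule sum0[OF inimg[OF inU]])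
    qed
  qed
  then have "R k0 0 = 0" using k0 zero by blast
  then show "p k0 x / q k0 x = 0" by (simp add: R_def t0(2))
qed

end
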